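(* Let $k\ge0$ be an integer and let $X_{0,k}\subseteq\{0,1\}^{\mathbb{Z}}$ be the $(0,k)$-RLL system, i.e., the set of binary bi-infinite sequences containing no $k+1$ consecutive zeros. Let $\mu^{\mathsf{u}}$ be the uniform Bernoulli i.i.d. measure on $\{0,1\}^{\mathbb{Z}}$. Then \[R_0(X_{0,k},\{0,1\}^{\mathbb{Z}},\mu^{\mathsf{u}})=\frac{1}{2(2^{k+1}-1)}.\]
   Context: For a shift space $X$, $\mathscr{B}_n(X)$ is the set of length-$n$ words appearing as consecutive subwords of elements of $X$. $d$ is the Hamming distance, $B_r(\overline{x})$ the Hamming ball. For $A,C\subseteq\Sigma^n$, a probability measure $\eta$ on $\Sigma^n$ and $\varepsilon>0$: $R_\varepsilon(C,A,\eta)=\min\{r\in\mathbb{Z}_{\ge0}:\eta(A\cap\bigcup_{\overline{x}\in C}B_r(\overline{x}))\ge1-\varepsilon\}$. For shift spaces $X,Y$ and a shift-invariant ergodic probability measure $\mu$ on $Y$ with marginal $\mu_n$ on coordinates $0,\dots,n-1$: $R_\varepsilon(X,Y,\mu)=\liminf_n\frac1nR_\varepsilon(\mathscr{B}_n(X),\mathscr{B}_n(Y),\mu_n)$ and $R_0(X,Y,\mu)=\lim_{\varepsilon\to0}R_\varepsilon(X,Y,\mu)$. *)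

theory Defs
  imports "HOL-Probability.Probability"
begin

definition hamming :: "'a list \<Rightarrow> 'a list \<Rightarrow> nat" where
  "hamming xs ys = card {i. i < length xs \<and> xs ! i \<noteq> ys ! i}"

definition hball :: "nat \<Rightarrow> 'a list \<Rightarrow> 'a list set" where
  "hball r xs = {ys. length ys = length xs \<and> hamming xs ys \<le> r}"

definition language :: "(int \<Rightarrow> 'a) set \<Rightarrow> nat \<Rightarrow> 'a list set" where
  "language X n = {map (\<lambda>j. x (i + int j)) [0..<n] | x i. x \<in> X}"

definition R_words :: "real \<Rightarrow> 'a list set \<Rightarrow> 'a list set \<Rightarrow> 'a list pmf \<Rightarrow> nat" where
  "R_words \<epsilon> C A \<eta> =
     (LEAST r::nat. measure_pmf.prob \<eta> (A \<inter> (\<Union>x\<in>C. hball r x)) \<ge> 1 - \<epsilon>)"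

text \<open>R_eps(X, Y, mu), where the measure mu on Y is given through its family of
  marginals mu_n on the coordinates 0..n-1 (a measure on length-n words).\<close>

definition R_shift :: "real \<Rightarrow> (int \<Rightarrow> 'a) set \<Rightarrow> (int \<Rightarrow> 'a) set \<Rightarrow> (nat \<Rightarrow> 'a list pmf) \<Rightarrow> ereal" where
  "R_shift \<epsilon> X Y \<mu>n =
     liminf (\<lambda>n. ereal (real (R_words \<epsilon> (language X n) (language Y n) (\<mu>n n)) / real n))"

text \<open>The (0,k)-RLL system over {0,1} (False = 0, True = 1): no k+1 consecutive zeros.\<close>

definition RLL :: "nat \<Rightarrow> (int \<Rightarrow> bool) set" where
  "RLL k = {x. \<not> (\<exists>i. \<forall>j<k+1. x (i + int j) = False)}"

definition full_shift :: "(int \<Rightarrow> bool) set" where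
  "full_shift = UNIV"

text \<open>Marginal of the uniform Bernoulli i.i.d. measure on coordinates 0..n-1:
  the uniform distribution on binary words of length n.\<close>

definition uniform_marginal :: "nat \<Rightarrow> bool list pmf" where
  "uniform_marginal n = pmf_of_set {w. length w = n}"

end

theory Submission
  imports Defs
begin

definition nx :: "nat \<Rightarrow> nat \<Rightarrow> bool \<Rightarrow> nat" where
  "nx k j b = (if b then 0 else if j = k then 0 else Suc j)"

fun fl :: "nat \<Rightarrow> nat \<Rightarrow> bool list \<Rightarrow> nat" where
  "fl k j [] = 0"
| "fl k j (b # w) = (if \<not> b \<and> j = k then 1 else 0) + fl k (nx k j b) w"

fun st :: "nat \<Rightarrow> nat \<Rightarrow> bool list \<Rightarrow> nat" where
  "st k j [] = j"
| "st k j (b # w) = st k (nx k j b) w"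

fun fx :: "nat \<Rightarrow> nat \<Rightarrow> bool list \<Rightarrow> bool list" where
  "fx k j [] = []"
| "fx k j (b # w) = (b \<or> j = k) # fx k (nx k j b) w"

lemma nx_le: "j \<le> k \<Longrightarrow> nx k j b \<le> k"
  by (auto simp: nx_def)

lemma st_le: "j \<le> k \<Longrightarrow> st k j w \<le> k"
  by (induction w arbitrary: j) (auto simp: nx_le)

lemma fl_mono: "j \<le> k \<Longrightarrow> j' \<le> k \<Longrightarrow>
   fl k j w \<le> fl k j' w + 1 \<and> (j \<le> j' \<longrightarrow> fl k j w \<le> fl k j' w)"
proof (induction w arbitrary: j j')
  case Nil then show ?case by simp
next
  case (Cons b w)
  show ?case
  proof (cases b)
    case True then show ?thesis by (simp add: nx_def)
  next
    case False
    have a: "fl k 0 w \<le> fl k (Suc j') w" if "j' < k" for j'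
      using Cons.IH[of 0 "Suc j'"] that by simp
    have b: "fl k (Suc j) w \<le> fl k 0 w + 1" if "j < k" for j
      using Cons.IH[of "Suc j" 0] that by simp
    show ?thesis
    proof (cases "j = k")
      case True
      then show ?thesis using False Cons.prems a b Cons.IH[of 0 0] by (auto simp: nx_def)
    next
      case jk: False
      show ?thesis
      proof (cases "j' = k")
        case True
        have "j < k" using jk Cons.prems by simp
        then show ?thesis using False jk True b[of j] by (auto simp: nx_def)
      next
        case False
        then show ?thesis using \<open>\<not> b\<close> jk Cons.prems Cons.IH[of "Suc j" "Suc j'"] by (auto simp: nx_def)
      qed
    qed
  qed
qed

lemma hamming_Nil[simp]: "hamming [] ys = 0"
  by (simp add: hamming_def)

lemma hamming_Cons[simp]: "hamming (a # xs) (b # ys) = (if a = b then 0 else 1) + hamming xs ys"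
proof -
  have e: "{i. i < length (a # xs) \<and> (a # xs) ! i \<noteq> (b # ys) ! i}
     = {i::nat. i = 0 \<and> a \<noteq> b} \<union> Suc ` {i. i < length xs \<and> xs ! i \<noteq> ys ! i}"
  proof (rule set_eqI)
    fix x show "x \<in> {i. i < length (a # xs) \<and> (a # xs) ! i \<noteq> (b # ys) ! i} \<longleftrightarrow>
      x \<in> {i::nat. i = 0 \<and> a \<noteq> b} \<union> Suc ` {i. i < length xs \<and> xs ! i \<noteq> ys ! i}"
      by (cases x) auto
  qed
  have "card ({i::nat. i = 0 \<and> a \<noteq> b} \<union> Suc ` {i. i < length xs \<and> xs ! i \<noteq> ys ! i})
      = card {i::nat. i = 0 \<and> a \<noteq> b} + card (Suc ` {i. i < length xs \<and> xs ! i \<noteq> ys ! i})"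
    by (intro card_Un_disjoint) (auto intro: finite_subset[of _ "{0}"])
  moreover have "card (Suc ` {i. i < length xs \<and> xs ! i \<noteq> ys ! i}) = hamming xs ys"
    by (simp add: card_image hamming_def)
  moreover have "card {i::nat. i = 0 \<and> a \<noteq> b} = (if a = b then 0 else 1)"
    by auto
  ultimately show ?thesis unfolding hamming_def[of "a#xs"] e by simp
qed

lemma hamming_sym: "length xs = length ys \<Longrightarrow> hamming xs ys = hamming ys xs"
  unfolding hamming_def by (metis (mono_tags, lifting))

lemma length_fx[simp]: "length (fx k j w) = length w"
  by (induction w arbitrary: j) auto

lemma ham_fx: "hamming w (fx k j w) = fl k j w"
  by (induction w arbitrary: j) (auto simp: nx_def)

definition noWin :: "nat \<Rightarrow> bool list \<Rightarrow> bool" where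
  "noWin k v \<longleftrightarrow> \<not> (\<exists>i. i + Suc k \<le> length v \<and> (\<forall>t<Suc k. v ! (i + t) = False))"

lemma noWin_suffix: "noWin k (xs @ ys) \<Longrightarrow> noWin k ys"
  unfolding noWin_def
proof (elim contrapos_nn exE conjE)
  fix i assume "i + Suc k \<le> length ys" "\<forall>t<Suc k. ys ! (i + t) = False"
  then show "\<exists>i. i + Suc k \<le> length (xs @ ys) \<and> (\<forall>t<Suc k. (xs @ ys) ! (i + t) = False)"
    by (intro exI[of _ "length xs + i"]) (auto simp: nth_append add.assoc)
qed

lemma noWin_cons_True: "j \<le> k \<Longrightarrow> noWin k rest \<Longrightarrow> noWin k (replicate j False @ True # rest)"
  unfolding noWin_def
proof (elim contrapos_nn exE conjE)
  fix i assume jk: "j \<le> k" and l: "i + Suc k \<le> length (replicate j False @ True # rest)"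
    and w: "\<forall>t<Suc k. (replicate j False @ True # rest) ! (i + t) = False"
  show "\<exists>i. i + Suc k \<le> length rest \<and> (\<forall>t<Suc k. rest ! (i + t) = False)"
  proof (cases "i \<le> j")
    case True
    have "j - i < Suc k" using jk by simp
    from w[rule_format, OF this] True show ?thesis by (simp add: nth_append)
  next
    case False
    show ?thesis
    proof (intro exI[of _ "i - Suc j"] conjI allI impI)
      show "i - Suc j + Suc k \<le> length rest" using l False by simp
      fix t assume "t < Suc k"
      have e: "i + t - j = Suc (i - Suc j + t)" using False by simp
      from w[rule_format, OF \<open>t < Suc k\<close>] False have "(True # rest) ! (i + t - j) = False"
        by (simp add: nth_append)
      then show "rest ! (i - Suc j + t) = False" unfolding e by simp
    qed
  qed
qed

lemma rep_snoc: "replicate j x @ x # X = replicate (Suc j) x @ X"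
  by (simp add: replicate_app_Cons_same)

lemma fx_noWin: "j \<le> k \<Longrightarrow> noWin k (replicate j False @ fx k j w)"
proof (induction w arbitrary: j)
  case Nil then show ?case by (simp add: noWin_def)
next
  case (Cons b w)
  show ?case
  proof (cases "b \<or> j = k")
    case True
    then have "nx k j b = 0" by (auto simp: nx_def)
    have "noWin k (fx k 0 w)" using Cons.IH[of 0] by simp
    then have "noWin k (replicate j False @ True # fx k 0 w)" using noWin_cons_True[of j k "fx k 0 w"] Cons.prems by simp
    then show ?thesis using True \<open>nx k j b = 0\<close> by simp
  next
    case False
    then have "nx k j b = Suc j" "Suc j \<le> k" using Cons.prems by (auto simp: nx_def)
    then show ?thesis using False Cons.IH[of "Suc j"] by (simp add: rep_snoc)
  qed
qed

lemma fl_lower: "j \<le> k \<Longrightarrow> length v = length w \<Longrightarrow> noWin k (replicate j False @ v)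
   \<Longrightarrow> fl k j w \<le> hamming w v"
proof (induction w arbitrary: j v)
  case Nil then show ?case by simp
next
  case (Cons b w)
  then obtain c v' where v: "v = c # v'" by (cases v) auto
  have len: "length v' = length w" using Cons.prems v by simp
  have nw': "noWin k v'" using Cons.prems(3) noWin_suffix[of k "replicate j False @ [c]" v'] v by simp
  have ih0: "fl k 0 w \<le> hamming w v'" using Cons.IH[of 0 v'] len nw' by simp
  show ?case
  proof (cases b)
    case True then show ?thesis using ih0 v by (auto simp: nx_def)
  next
    case False
    show ?thesis
    proof (cases "j = k")
      case jk: True
      show ?thesis
      proof (cases c)
        case True then show ?thesis using ih0 v False jk by (auto simp: nx_def)
      next
        case cF: False
        have "\<not> noWin k (replicate j False @ v)"
          unfolding noWin_def using v cF jk
          by (intro notI, elim notE, intro exI[of _ 0]) (auto simp: nth_append)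
        then show ?thesis using Cons.prems by simp
      qed
    next
      case jk: False
      then have sj: "Suc j \<le> k" using Cons.prems by simp
      show ?thesis
      proof (cases c)
        case True
        have "fl k (Suc j) w \<le> fl k 0 w + 1" using fl_mono[of "Suc j" k 0 w] sj by simp
        then show ?thesis using ih0 v False jk True by (auto simp: nx_def)
      next
        case cF: False
        have "fl k (Suc j) w \<le> hamming w v'"
          using Cons.IH[of "Suc j" v'] sj len Cons.prems(3) v cF by (simp add: rep_snoc)
        then show ?thesis using v False jk cF by (auto simp: nx_def)
      qed
    qed
  qed
qed


lemma lang_RLL: "language (RLL k) n = {v. length v = n \<and> noWin k v}"
proof (rule set_eqI, rule iffI)
  fix v assume "v \<in> language (RLL k) n"
  then obtain x i where x: "x \<in> RLL k" and v: "v = map (\<lambda>j. x (i + int j)) [0..<n]"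
    unfolding language_def by blast
  have "noWin k v"
    unfolding noWin_def
  proof
    assume "\<exists>p. p + Suc k \<le> length v \<and> (\<forall>t<Suc k. v ! (p + t) = False)"
    then obtain p where p: "p + Suc k \<le> length v" "\<forall>t<Suc k. v ! (p + t) = False" by blast
    have "\<forall>t<k+1. x ((i + int p) + int t) = False"
    proof (intro allI impI)
      fix t assume "t < k + 1"
      then have "v ! (p + t) = False" "p + t < n" using p v by auto
      then show "x ((i + int p) + int t) = False" using v by (simp add: add.assoc)
    qed
    then show False using x unfolding RLL_def by blast
  qed
  then show "v \<in> {v. length v = n \<and> noWin k v}" using v by simp
next
  fix v assume "v \<in> {v. length v = n \<and> noWin k v}"
  then have lv: "length v = n" and nw: "noWin k v" by auto
  define x where "x = (\<lambda>i::int. if 0 \<le> i \<and> i < int n then v ! nat i else True)"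
  have "x \<in> RLL k"
    unfolding RLL_def
  proof (simp only: mem_Collect_eq, rule notI, elim exE)
    fix i assume a: "\<forall>j<k+1. x (i + int j) = False"
    have r: "0 \<le> i + int t \<and> i + int t < int n \<and> v ! nat (i + int t) = False" if "t < k + 1" for t
      using a[rule_format, OF that] unfolding x_def by (auto split: if_splits)
    have "0 \<le> i" using r[of 0] by simp
    have "int (nat i + k) < int n" using r[of k] \<open>0 \<le> i\<close> by simp
    then have "nat i + Suc k \<le> length v" using lv by linarith
    moreover have "\<forall>t<Suc k. v ! (nat i + t) = False"
    proof (intro allI impI)
      fix t assume "t < Suc k"
      then show "v ! (nat i + t) = False" using r[of t] \<open>0 \<le> i\<close> by (simp add: nat_add_distrib)
    qed
    ultimately show False using nw unfolding noWin_def by blast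
  qed
  moreover have "v = map (\<lambda>j. x (0 + int j)) [0..<n]"
    by (rule nth_equalityI) (auto simp: lv x_def)
  ultimately show "v \<in> language (RLL k) n" unfolding language_def by blast
qed

lemma lang_full: "language full_shift n = {v :: bool list. length v = n}"
proof (rule set_eqI, rule iffI)
  fix v :: "bool list" assume "v \<in> language full_shift n"
  then show "v \<in> {v. length v = n}" unfolding language_def by auto
next
  fix v :: "bool list" assume "v \<in> {v. length v = n}"
  then have lv: "length v = n" by simp
  define x where "x = (\<lambda>i::int. if 0 \<le> i \<and> i < int n then v ! nat i else True)"
  have "v = map (\<lambda>j. x (0 + int j)) [0..<n]"
    by (rule nth_equalityI) (auto simp: lv x_def)
  then show "v \<in> language full_shift n" unfolding language_def full_shift_def by blast
qed

definition W :: "nat \<Rightarrow> bool list set" where "W n = {w. length w = n}"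

lemma finite_W[simp]: "finite (W n)"
proof -
  have "finite {xs. set xs \<subseteq> (UNIV::bool set) \<and> length xs = n}"
    by (rule finite_lists_length_eq) simp
  then show ?thesis by (simp add: W_def)
qed

lemma card_W: "card (W n) = 2 ^ n"
proof -
  have "card {xs. set xs \<subseteq> (UNIV::bool set) \<and> length xs = n} = card (UNIV::bool set) ^ n"
    by (rule card_lists_length_eq) simp
  then show ?thesis by (simp add: W_def)
qed

lemma W_ne[simp]: "W n \<noteq> {}"
  using card_W[of n] by (metis card.empty power_not_zero zero_neq_numeral)

lemma W_0: "W 0 = {[]}" by (auto simp: W_def)

lemma W_Suc: "W (Suc n) = (Cons True) ` W n \<union> (Cons False) ` W n"
proof (rule set_eqI, rule iffI)
  fix x assume "x \<in> W (Suc n)"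
  then obtain b y where "x = b # y" "y \<in> W n" by (auto simp: W_def length_Suc_conv)
  then show "x \<in> (Cons True) ` W n \<union> (Cons False) ` W n" by (cases b) auto
qed (auto simp: W_def)

lemma sum_W_Suc: "(\<Sum>w\<in>W (Suc n). F w) = (\<Sum>w\<in>W n. F (True # w) + F (False # w))"
proof -
  have "(\<Sum>w\<in>W (Suc n). F w) = (\<Sum>w\<in>(Cons True) ` W n. F w) + (\<Sum>w\<in>(Cons False) ` W n. F w)"
    unfolding W_Suc by (rule sum.union_disjoint) auto
  also have "\<dots> = (\<Sum>w\<in>W n. F (True # w)) + (\<Sum>w\<in>W n. F (False # w))"
    by (simp add: sum.reindex)
  finally show ?thesis by (simp add: sum.distrib)
qed

definition cc :: "nat \<Rightarrow> real" where "cc k = 1 / (2 * (2 ^ (k + 1) - 1))"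
definition phi :: "nat \<Rightarrow> nat \<Rightarrow> real" where "phi k j = 2 * cc k * (2 ^ j - 1)"
definition Del :: "nat \<Rightarrow> nat \<Rightarrow> bool \<Rightarrow> real" where
  "Del k j b = (if \<not> b \<and> j = k then 1 else 0) + phi k (nx k j b) - phi k j - cc k"
definition MM :: "nat \<Rightarrow> nat \<Rightarrow> bool list \<Rightarrow> real" where
  "MM k j w = real (fl k j w) + phi k (st k j w) - phi k j - cc k * real (length w)"

lemma cc_key: "cc k * (2 * 2 ^ k - 1) = 1 / 2"
proof -
  have "(1::real) \<le> 2 ^ k" using one_le_power[of "2::real" k] by simp
  then have "(2::real) * 2 ^ k - 1 \<noteq> 0" by linarith
  then show ?thesis by (simp add: cc_def)
qed

lemma cc_pos: "0 < cc k" "cc k \<le> 1/2"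
proof -
  have "(1::real) \<le> 2 ^ k" using one_le_power[of "2::real" k] by simp
  then have h: "(2::real) \<le> 2 * (2 ^ (k+1) - 1)" by simp
  then have p: "0 < (2::real) * (2 ^ (k+1) - 1)" by linarith
  then show c0: "0 < cc k" by (simp add: cc_def)
  have e: "cc k * (2 * (2 ^ (k+1) - 1)) = 1" using p by (simp add: cc_def)
  have "cc k * 2 \<le> cc k * (2 * (2 ^ (k+1) - 1))" using h c0 by (intro mult_left_mono) auto
  then show "cc k \<le> 1/2" using e by linarith
qed

lemma phi_bounds: "j \<le> k \<Longrightarrow> 0 \<le> phi k j \<and> phi k j < 1"
proof -
  assume "j \<le> k"
  have "(1::real) \<le> 2 ^ j" using one_le_power[of "2::real" j] by simp
  moreover have "(2::real) ^ j \<le> 2 ^ k" using \<open>j \<le> k\<close> by (simp add: power_increasing)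
  moreover have "(2::real) ^ k < 2 * 2 ^ k" by simp
  ultimately have "(2::real)^j - 1 \<ge> 0" "(2::real)^j - 1 < 2 * 2 ^ k - 1" by linarith+
  then have "2 * cc k * (2^j - 1) < 2 * cc k * (2 * 2 ^ k - 1)" "0 \<le> 2 * cc k * (2^j - 1)"
    using cc_pos(1)[of k] by auto
  then show ?thesis using cc_key[of k] by (simp add: phi_def)
qed

lemma phi0[simp]: "phi k 0 = 0" by (simp add: phi_def)

lemma MM_Nil[simp]: "MM k j [] = 0" by (simp add: MM_def)

lemma MM_Cons: "MM k j (b # w) = Del k j b + MM k (nx k j b) w"
  by (simp add: MM_def Del_def algebra_simps)

lemma Del_sum: "j \<le> k \<Longrightarrow> Del k j True + Del k j False = 0"
proof (cases "j = k")
  case True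
  then show ?thesis using cc_key[of k] by (simp add: Del_def nx_def phi_def algebra_simps)
next
  case False
  assume "j \<le> k"
  then show ?thesis using False by (simp add: Del_def nx_def phi_def algebra_simps)
qed

lemma Del_sq: "j \<le> k \<Longrightarrow> (Del k j b)\<^sup>2 \<le> 4"
proof -
  assume jk: "j \<le> k"
  have "0 \<le> phi k (nx k j b)" "phi k (nx k j b) < 1" using phi_bounds[OF nx_le[OF jk]] by auto
  moreover have "0 \<le> phi k j" "phi k j < 1" using phi_bounds[OF jk] by auto
  moreover note cc_pos[of k]
  ultimately have "-2 \<le> Del k j b" "Del k j b \<le> 2" by (auto simp: Del_def)
  then have "\<bar>Del k j b\<bar> \<le> 2" by simp
  then have "\<bar>Del k j b\<bar>\<^sup>2 \<le> 2\<^sup>2" by (rule power_mono) simp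
  then show ?thesis by simp
qed

lemma MM_mean: "j \<le> k \<Longrightarrow> (\<Sum>w\<in>W n. MM k j w) = 0"
proof (induction n arbitrary: j)
  case 0 then show ?case by (simp add: W_0)
next
  case (Suc n)
  have "(\<Sum>w\<in>W (Suc n). MM k j w)
     = (\<Sum>w\<in>W n. (Del k j True + Del k j False) + (MM k (nx k j True) w + MM k (nx k j False) w))"
    unfolding sum_W_Suc MM_Cons by (simp add: algebra_simps)
  also have "\<dots> = (\<Sum>w\<in>W n. MM k (nx k j True) w) + (\<Sum>w\<in>W n. MM k (nx k j False) w)"
    using Del_sum[OF Suc.prems] by (simp add: sum.distrib)
  also have "\<dots> = 0" using Suc.IH nx_le[OF Suc.prems] by simp
  finally show ?case .
qed

lemma MM_var: "j \<le> k \<Longrightarrow> (\<Sum>w\<in>W n. (MM k j w)\<^sup>2) \<le> 4 * real n * 2 ^ n"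
proof (induction n arbitrary: j)
  case 0 then show ?case by (simp add: W_0)
next
  case (Suc n)
  let ?d1 = "Del k j True" and ?d2 = "Del k j False"
  let ?j1 = "nx k j True" and ?j2 = "nx k j False"
  have j1: "?j1 \<le> k" and j2: "?j2 \<le> k" using nx_le[OF Suc.prems] by auto
  have "(\<Sum>w\<in>W (Suc n). (MM k j w)\<^sup>2)
     = (\<Sum>w\<in>W n. (?d1\<^sup>2 + ?d2\<^sup>2) + 2 * ?d1 * MM k ?j1 w + 2 * ?d2 * MM k ?j2 w
          + (MM k ?j1 w)\<^sup>2 + (MM k ?j2 w)\<^sup>2)"
    unfolding sum_W_Suc MM_Cons by (simp add: power2_sum algebra_simps)
  also have "\<dots> = real (card (W n)) * (?d1\<^sup>2 + ?d2\<^sup>2) + 2 * ?d1 * (\<Sum>w\<in>W n. MM k ?j1 w)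
       + 2 * ?d2 * (\<Sum>w\<in>W n. MM k ?j2 w) + (\<Sum>w\<in>W n. (MM k ?j1 w)\<^sup>2) + (\<Sum>w\<in>W n. (MM k ?j2 w)\<^sup>2)"
    by (simp add: sum.distrib sum_distrib_left)
  also have "\<dots> = 2 ^ n * (?d1\<^sup>2 + ?d2\<^sup>2) + (\<Sum>w\<in>W n. (MM k ?j1 w)\<^sup>2) + (\<Sum>w\<in>W n. (MM k ?j2 w)\<^sup>2)"
    using MM_mean[OF j1, of n] MM_mean[OF j2, of n] by (simp add: card_W)
  also have "\<dots> \<le> 2 ^ n * 8 + 4 * real n * 2 ^ n + 4 * real n * 2 ^ n"
    using Del_sq[OF Suc.prems, of True] Del_sq[OF Suc.prems, of False] Suc.IH[OF j1] Suc.IH[OF j2]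
    by (intro add_mono mult_left_mono) auto
  also have "\<dots> = 4 * real (Suc n) * 2 ^ Suc n" by (simp add: algebra_simps)
  finally show ?case .
qed


lemma fl_le_length: "fl k j w \<le> length w"
proof (induction w arbitrary: j)
  case (Cons b w)
  have "fl k (nx k j b) w \<le> length w" by (rule Cons.IH)
  then show ?case by (cases "\<not> b \<and> j = k") auto
qed simp

lemma ball_set: "language full_shift n \<inter> (\<Union>x\<in>language (RLL k) n. hball r x)
   = {w\<in>W n. fl k 0 w \<le> r}"
proof (rule set_eqI, rule iffI)
  fix w assume "w \<in> language full_shift n \<inter> (\<Union>x\<in>language (RLL k) n. hball r x)"
  then obtain v where w: "length w = n" and v: "length v = n" "noWin k v" and h: "hamming v w \<le> r"
    unfolding lang_full lang_RLL hball_def by auto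
  have "fl k 0 w \<le> hamming w v" using fl_lower[of 0 k v w] v w by simp
  also have "\<dots> = hamming v w" using v w by (simp add: hamming_sym)
  finally show "w \<in> {w\<in>W n. fl k 0 w \<le> r}" using h w by (simp add: W_def)
next
  fix w assume "w \<in> {w\<in>W n. fl k 0 w \<le> r}"
  then have w: "length w = n" and f: "fl k 0 w \<le> r" by (auto simp: W_def)
  have nw: "noWin k (fx k 0 w)" using fx_noWin[of 0 k w] by simp
  have "hamming (fx k 0 w) w = fl k 0 w" using ham_fx[of w k 0] by (simp add: hamming_sym)
  then have "w \<in> hball r (fx k 0 w)" using f unfolding hball_def by simp
  moreover have "fx k 0 w \<in> language (RLL k) n" using w nw unfolding lang_RLL by simp
  ultimately show "w \<in> language full_shift n \<inter> (\<Union>x\<in>language (RLL k) n. hball r x)"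
    using w unfolding lang_full by blast
qed

lemma prob_eq: "measure_pmf.prob (uniform_marginal n)
   (language full_shift n \<inter> (\<Union>x\<in>language (RLL k) n. hball r x))
   = real (card {w\<in>W n. fl k 0 w \<le> r}) / 2 ^ n"
proof -
  have "uniform_marginal n = pmf_of_set (W n)" by (simp add: uniform_marginal_def W_def)
  then show ?thesis unfolding ball_set
    by (simp add: measure_pmf_of_set card_W Int_absorb1)
qed

lemma sq_dev: "(\<Sum>w\<in>W n. (real (fl k 0 w) - cc k * real n)\<^sup>2) \<le> (8 * real n + 2) * 2 ^ n"
proof -
  have "(real (fl k 0 w) - cc k * real n)\<^sup>2 \<le> 2 * (MM k 0 w)\<^sup>2 + 2" if "w \<in> W n" for w
  proof -
    have e: "real (fl k 0 w) - cc k * real n = MM k 0 w - phi k (st k 0 w)"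
      using that by (simp add: MM_def W_def)
    have p: "0 \<le> phi k (st k 0 w)" "phi k (st k 0 w) < 1" using phi_bounds[OF st_le[of 0 k w]] by auto
    have "(MM k 0 w - phi k (st k 0 w))\<^sup>2 \<le> 2 * (MM k 0 w)\<^sup>2 + 2 * (phi k (st k 0 w))\<^sup>2"
    proof -
      have "(MM k 0 w - phi k (st k 0 w))\<^sup>2 = 2 * (MM k 0 w)\<^sup>2 + 2 * (phi k (st k 0 w))\<^sup>2
         - (MM k 0 w + phi k (st k 0 w))\<^sup>2" by (simp add: power2_eq_square algebra_simps)
      moreover have "0 \<le> (MM k 0 w + phi k (st k 0 w))\<^sup>2" by simp
      ultimately show ?thesis by linarith
    qed
    moreover have "(phi k (st k 0 w))\<^sup>2 \<le> 1" using p by (simp add: power_le_one)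
    ultimately show ?thesis unfolding e by linarith
  qed
  then have "(\<Sum>w\<in>W n. (real (fl k 0 w) - cc k * real n)\<^sup>2) \<le> (\<Sum>w\<in>W n. 2 * (MM k 0 w)\<^sup>2 + 2)"
    by (rule sum_mono)
  also have "\<dots> = 2 * (\<Sum>w\<in>W n. (MM k 0 w)\<^sup>2) + 2 * 2 ^ n"
    by (simp add: sum.distrib sum_distrib_left card_W)
  also have "\<dots> \<le> 2 * (4 * real n * 2 ^ n) + 2 * 2 ^ n"
    using MM_var[of 0 k n] by simp
  finally show ?thesis by (simp add: algebra_simps)
qed

lemma cheb: "0 < t \<Longrightarrow> real (card {w\<in>W n. t \<le> \<bar>real (fl k 0 w) - cc k * real n\<bar>}) * t\<^sup>2
   \<le> (8 * real n + 2) * 2 ^ n"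
proof -
  assume t: "0 < t"
  let ?B = "{w\<in>W n. t \<le> \<bar>real (fl k 0 w) - cc k * real n\<bar>}"
  have "real (card ?B) * t\<^sup>2 = (\<Sum>w\<in>?B. t\<^sup>2)" by simp
  also have "\<dots> \<le> (\<Sum>w\<in>?B. (real (fl k 0 w) - cc k * real n)\<^sup>2)"
  proof (rule sum_mono)
    fix w assume "w \<in> ?B"
    then have "t \<le> \<bar>real (fl k 0 w) - cc k * real n\<bar>" by simp
    then have "t\<^sup>2 \<le> \<bar>real (fl k 0 w) - cc k * real n\<bar>\<^sup>2" using t by (intro power_mono) auto
    then show "t\<^sup>2 \<le> (real (fl k 0 w) - cc k * real n)\<^sup>2" by simp
  qed
  also have "\<dots> \<le> (\<Sum>w\<in>W n. (real (fl k 0 w) - cc k * real n)\<^sup>2)"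
    by (rule sum_mono2) auto
  also have "\<dots> \<le> (8 * real n + 2) * 2 ^ n" by (rule sq_dev)
  finally show ?thesis .
qed


lemma card_split: "card {w\<in>W n. Q w} + card {w\<in>W n. \<not> Q w} = 2 ^ n"
proof -
  have "card ({w\<in>W n. Q w} \<union> {w\<in>W n. \<not> Q w}) = card {w\<in>W n. Q w} + card {w\<in>W n. \<not> Q w}"
    by (intro card_Un_disjoint) auto
  moreover have "{w\<in>W n. Q w} \<union> {w\<in>W n. \<not> Q w} = W n" by auto
  ultimately show ?thesis by (simp add: card_W)
qed

lemma Rn_lim:
  assumes e0: "0 < \<epsilon>" and e1: "\<epsilon> < 1"
  shows "(\<lambda>n. real (R_words \<epsilon> (language (RLL k) n) (language full_shift n) (uniform_marginal n)) / real n)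
     \<longlonglongrightarrow> cc k"
proof (rule LIMSEQ_I)
  fix r :: real assume r: "0 < r"
  define \<delta> where "\<delta> = r / 2"
  define m where "m = min \<epsilon> (1 - \<epsilon>)"
  have d0: "0 < \<delta>" using r by (simp add: \<delta>_def)
  have m0: "0 < m" using e0 e1 by (simp add: m_def)
  define N where "N = nat \<lceil>20 / (\<delta>\<^sup>2 * m)\<rceil> + 1"
  show "\<exists>no. \<forall>n\<ge>no. norm (real (R_words \<epsilon> (language (RLL k) n) (language full_shift n) (uniform_marginal n)) / real n - cc k) < r"
  proof (intro exI allI impI)
    fix n assume nN: "N \<le> n"
    have nbig: "20 / (\<delta>\<^sup>2 * m) < real n" using nN unfolding N_def by linarith
    have npos: "0 < real n" using nN unfolding N_def by simp
    have dm: "0 < \<delta>\<^sup>2 * m" using d0 m0 by simp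
    have big2: "20 < \<delta>\<^sup>2 * m * real n" using nbig dm by (simp add: field_simps)
    define P where "P = (\<lambda>a. real (card {w\<in>W n. fl k 0 w \<le> a}) / 2 ^ n)"
    define R where "R = R_words \<epsilon> (language (RLL k) n) (language full_shift n) (uniform_marginal n)"
    have R_def2: "R = (LEAST a. 1 - \<epsilon> \<le> P a)"
      unfolding R_def R_words_def prob_eq P_def ..
    define B where "B = {w\<in>W n. \<delta> * real n \<le> \<bar>real (fl k 0 w) - cc k * real n\<bar>}"
    have ch: "real (card B) * (\<delta> * real n)\<^sup>2 \<le> (8 * real n + 2) * 2 ^ n"
      unfolding B_def using d0 npos by (intro cheb) simp
    have cB: "real (card B) < m * 2 ^ n"
    proof (cases "card B = 0")
      case True then show ?thesis using m0 by simp
    next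
      case False
      have t1: "(8 * real n + 2) * 2 ^ n \<le> (10 * 2 ^ n) * real n" using npos nN unfolding N_def by simp
      have t2: "real (card B) * (\<delta>\<^sup>2 * real n) * real n = real (card B) * (\<delta> * real n)\<^sup>2"
        by (simp add: power2_eq_square algebra_simps)
      have "real (card B) * (\<delta>\<^sup>2 * real n) * real n \<le> (10 * 2 ^ n) * real n"
        unfolding t2 using ch t1 by (rule order_trans)
      then have a: "real (card B) * (\<delta>\<^sup>2 * real n) \<le> 10 * 2 ^ n" using npos by simp
      have "real (card B) * 20 < real (card B) * (\<delta>\<^sup>2 * m * real n)"
        using big2 False by simp
      also have "\<dots> = m * (real (card B) * (\<delta>\<^sup>2 * real n))" by (simp add: algebra_simps)
      also have "\<dots> \<le> m * (10 * 2 ^ n)" using a m0 by (intro mult_left_mono) auto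
      finally show ?thesis by simp
    qed
    have mle: "m \<le> \<epsilon>" "m \<le> 1 - \<epsilon>" by (auto simp: m_def)
    have p2: "(0::real) < 2 ^ n" by simp
    define a0 where "a0 = nat \<lfloor>(cc k + \<delta>) * real n\<rfloor>"
    have x0: "0 \<le> (cc k + \<delta>) * real n" using cc_pos(1)[of k] d0 npos by simp
    have ra0: "real a0 = of_int \<lfloor>(cc k + \<delta>) * real n\<rfloor>" using x0 by (simp add: a0_def)
    have sub1: "{w\<in>W n. \<not> fl k 0 w \<le> a0} \<subseteq> B"
    proof
      fix w assume "w \<in> {w\<in>W n. \<not> fl k 0 w \<le> a0}"
      then have w: "w \<in> W n" and f: "a0 + 1 \<le> fl k 0 w" by auto
      have "real a0 + 1 \<le> real (fl k 0 w)" using f by linarith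
      moreover have "(cc k + \<delta>) * real n < real a0 + 1" using ra0 by linarith
      ultimately have "\<delta> * real n \<le> real (fl k 0 w) - cc k * real n" by (simp add: algebra_simps)
      then show "w \<in> B" using w by (simp add: B_def)
    qed
    have "card {w\<in>W n. \<not> fl k 0 w \<le> a0} \<le> card B"
      by (rule card_mono[OF _ sub1]) (simp add: B_def)
    then have u1: "real (card {w\<in>W n. \<not> fl k 0 w \<le> a0}) < m * 2 ^ n" using cB by linarith
    have u2: "real (card {w\<in>W n. fl k 0 w \<le> a0}) + real (card {w\<in>W n. \<not> fl k 0 w \<le> a0}) = 2 ^ n"
      using card_split[of n "\<lambda>w. fl k 0 w \<le> a0"] by (metis of_nat_add of_nat_numeral of_nat_power)
    have u3: "m * 2 ^ n \<le> \<epsilon> * 2 ^ n" using mle p2 by (intro mult_right_mono) auto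
    have "(1 - \<epsilon>) * 2 ^ n \<le> real (card {w\<in>W n. fl k 0 w \<le> a0})"
    proof -
      have u4: "(1 - \<epsilon>) * 2 ^ n = 2 ^ n - \<epsilon> * (2::real) ^ n" by (simp add: algebra_simps)
      show ?thesis unfolding u4 using u1 u2 u3 by linarith
    qed
    then have "1 - \<epsilon> \<le> P a0" using p2 by (simp add: P_def field_simps)
    then have "R \<le> a0" unfolding R_def2 by (rule Least_le)
    then have up: "real R \<le> (cc k + \<delta>) * real n" using ra0 by linarith
    have "1 - \<epsilon> \<le> P n"
    proof -
      have "{w\<in>W n. fl k 0 w \<le> n} = W n" using fl_le_length[of k 0] by (auto simp: W_def)
      then have "P n = 1" by (simp add: P_def card_W)
      then show ?thesis using e0 by simp
    qed
    then have PR: "1 - \<epsilon> \<le> P R" unfolding R_def2 by (rule LeastI)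
    have low: "(cc k - \<delta>) * real n < real R"
    proof (rule ccontr)
      assume "\<not> (cc k - \<delta>) * real n < real R"
      then have Rl: "real R \<le> (cc k - \<delta>) * real n" by simp
      have "{w\<in>W n. fl k 0 w \<le> R} \<subseteq> B"
      proof
        fix w assume "w \<in> {w\<in>W n. fl k 0 w \<le> R}"
        then have w: "w \<in> W n" and f: "real (fl k 0 w) \<le> real R" by auto
        then have "\<delta> * real n \<le> cc k * real n - real (fl k 0 w)" using Rl by (simp add: algebra_simps)
        then show "w \<in> B" using w by (simp add: B_def)
      qed
      then have "card {w\<in>W n. fl k 0 w \<le> R} \<le> card B"
        by (intro card_mono) (auto simp: B_def)
      then have "real (card {w\<in>W n. fl k 0 w \<le> R}) < (1 - \<epsilon>) * 2 ^ n"
      proof -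
        have "m * 2 ^ n \<le> (1 - \<epsilon>) * 2 ^ n" using mle p2 by (intro mult_right_mono) auto
        moreover have "real (card {w\<in>W n. fl k 0 w \<le> R}) \<le> real (card B)"
          using \<open>card {w\<in>W n. fl k 0 w \<le> R} \<le> card B\<close> by simp
        ultimately show ?thesis using cB by linarith
      qed
      then have "P R < 1 - \<epsilon>" using p2 by (simp add: P_def field_simps)
      then show False using PR by simp
    qed
    have "real R / real n \<le> cc k + \<delta>" using up npos by (simp add: field_simps)
    moreover have "cc k - \<delta> < real R / real n" using low npos by (simp add: field_simps)
    ultimately have "\<bar>real R / real n - cc k\<bar> < r" using d0 unfolding \<delta>_def by linarith
    then show "norm (real (R_words \<epsilon> (language (RLL k) n) (language full_shift n) (uniform_marginal n)) / real n - cc k) < r"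
      by (simp add: R_def)
  qed
qed

lemma Rshift_val: "0 < \<epsilon> \<Longrightarrow> \<epsilon> < 1 \<Longrightarrow> R_shift \<epsilon> (RLL k) full_shift uniform_marginal = ereal (cc k)"
  unfolding R_shift_def
  by (rule lim_imp_Liminf) (simp_all add: Rn_lim tendsto_ereal)

theorem theorem19:
  fixes k :: nat
  shows "((\<lambda>\<epsilon>. R_shift \<epsilon> (RLL k) full_shift uniform_marginal) \<longlongrightarrow>
            ereal (1 / (2 * (2 ^ (k + 1) - 1)))) (at_right (0::real))"
proof -
  have "eventually (\<lambda>\<epsilon>. R_shift \<epsilon> (RLL k) full_shift uniform_marginal = ereal (cc k)) (at_right (0::real))"
    using eventually_at_right_real[of 0 1] by (rule eventually_mono) (auto intro: Rshift_val)
  then have "((\<lambda>\<epsilon>. R_shift \<epsilon> (RLL k) full_shift uniform_marginal) \<longlongrightarrow> ereal (cc k)) (at_right (0::real))"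
    by (rule tendsto_eventually)
  then show ?thesis by (simp add: cc_def)
qed

end
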